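(* Let $A=(\alpha_{i,j})$ be an $n\times n$ ($n\ge 2$) symmetric exceptional magic matrix with rational entries, and let $s(A)$ be its common row/column sum. Then there exists a tree $(\mathcal R,\gamma)$ on $\{1,\dots,n\}$ such that $$A=s(A)I+\sum_{T\in\mathcal R}\gamma(T)A(T),$$ with $\gamma(T_0)=\inf\{-\alpha_{i,j}:i\neq j\}$.
   Context: A square matrix is magic if all its row sums and column sums are equal (to $s(A)$). It is exceptional if for every triple $(i,j,k)$ of distinct indices, the maximum of $\alpha_{i,j},\alpha_{j,k},\alpha_{k,i}$ is attained at least twice. $T_0=\{1,\dots,n\}$. A "species of tree" is a family $\mathcal R$ of subsets of $T_0$ containing $T_0$, each of cardinality $\ge2$, any two of which are either disjoint or nested. A tree is a pair $(\mathcal R,\gamma)$ with $\mathcal R$ a species of tree and $\gamma:\mathcal R\to\mathbf Q$ with $\gamma(T)>0$ for $T\neq T_0$. For $T$ of cardinality $n(T)\ge2$, $A(T)=(\alpha_{i,j})$ has $\alpha_{i,j}=-1$ if $i\ne j$, $\{i,j\}\subset T$, $\alpha_{i,i}=n(T)-1$ if $i\in T$, $0$ otherwise. $I$ is the identity matrix. *)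

theory Defs
  imports Complex_Main
begin

text \<open>Square matrices of size n are represented as functions nat \<Rightarrow> nat \<Rightarrow> rat,
  with indices ranging over T0 = {1..n}; values outside this range are irrelevant.\<close>

definition magic :: "nat \<Rightarrow> (nat \<Rightarrow> nat \<Rightarrow> rat) \<Rightarrow> rat \<Rightarrow> bool" where
  "magic n A s \<longleftrightarrow>
     (\<forall>i\<in>{1..n}. (\<Sum>j\<in>{1..n}. A i j) = s) \<and> (\<forall>j\<in>{1..n}. (\<Sum>i\<in>{1..n}. A i j) = s)"

definition symmetric_mat :: "nat \<Rightarrow> (nat \<Rightarrow> nat \<Rightarrow> rat) \<Rightarrow> bool" where
  "symmetric_mat n A \<longleftrightarrow> (\<forall>i\<in>{1..n}. \<forall>j\<in>{1..n}. A i j = A j i)"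

definition max_twice :: "rat \<Rightarrow> rat \<Rightarrow> rat \<Rightarrow> bool" where
  "max_twice a b c \<longleftrightarrow> (let m = max (max a b) c in
     (a = m \<and> b = m) \<or> (b = m \<and> c = m) \<or> (c = m \<and> a = m))"

definition exceptional :: "nat \<Rightarrow> (nat \<Rightarrow> nat \<Rightarrow> rat) \<Rightarrow> bool" where
  "exceptional n A \<longleftrightarrow>
     (\<forall>i\<in>{1..n}. \<forall>j\<in>{1..n}. \<forall>k\<in>{1..n}. i \<noteq> j \<and> j \<noteq> k \<and> k \<noteq> i \<longrightarrow>
        max_twice (A i j) (A j k) (A k i))"

definition species_of_tree :: "nat \<Rightarrow> nat set set \<Rightarrow> bool" where
  "species_of_tree n R \<longleftrightarrow>
     {1..n} \<in> R \<and>
     (\<forall>T\<in>R. T \<subseteq> {1..n} \<and> card T \<ge> 2) \<and>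
     (\<forall>T\<in>R. \<forall>U\<in>R. T \<inter> U = {} \<or> T \<subseteq> U \<or> U \<subseteq> T)"

definition is_tree :: "nat \<Rightarrow> nat set set \<Rightarrow> (nat set \<Rightarrow> rat) \<Rightarrow> bool" where
  "is_tree n R \<gamma> \<longleftrightarrow> species_of_tree n R \<and> (\<forall>T\<in>R. T \<noteq> {1..n} \<longrightarrow> \<gamma> T > 0)"

definition AT :: "nat set \<Rightarrow> nat \<Rightarrow> nat \<Rightarrow> rat" where
  "AT T i j = (if i \<noteq> j \<and> i \<in> T \<and> j \<in> T then -1
               else if i = j \<and> i \<in> T then of_nat (card T) - 1 else 0)"

end

theory Submission
  imports Defs
begin

definition ultra :: "nat set \<Rightarrow> (nat \<Rightarrow> nat \<Rightarrow> rat) \<Rightarrow> bool" where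
  "ultra S d \<longleftrightarrow> (\<forall>i\<in>S. \<forall>j\<in>S. \<forall>k\<in>S. i\<noteq>j \<and> j\<noteq>k \<and> i\<noteq>k \<longrightarrow> min (d i j) (d j k) \<le> d i k)"

definition DD :: "nat set \<Rightarrow> (nat \<Rightarrow> nat \<Rightarrow> rat) \<Rightarrow> rat set" where
  "DD S d = {d i j | i j. i\<in>S \<and> j\<in>S \<and> i\<noteq>j}"

lemma DD_finite: "finite S \<Longrightarrow> finite (DD S d)"
proof -
  assume "finite S"
  have "DD S d \<subseteq> (\<lambda>(i,j). d i j) ` (S \<times> S)" unfolding DD_def by auto
  thus ?thesis using \<open>finite S\<close> by (meson finite_SigmaI finite_imageI finite_subset)
qed

lemma DD_ne: "finite S \<Longrightarrow> card S \<ge> 2 \<Longrightarrow> DD S d \<noteq> {}"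
proof -
  assume "finite S" "card S \<ge> 2"
  then obtain a b where "a\<in>S" "b\<in>S" "a\<noteq>b"
    by (metis card_2_iff' card_le_Suc_iff numeral_2_eq_2 obtain_subset_with_card_n subsetD)
  thus ?thesis unfolding DD_def by auto
qed

definition good :: "nat set \<Rightarrow> (nat \<Rightarrow> nat \<Rightarrow> rat) \<Rightarrow> nat set set \<Rightarrow> (nat set \<Rightarrow> rat) \<Rightarrow> bool" where
  "good S d R \<gamma> \<longleftrightarrow> S \<in> R \<and> (\<forall>T\<in>R. T \<subseteq> S \<and> card T \<ge> 2) \<and>
     (\<forall>T\<in>R. \<forall>U\<in>R. T \<inter> U = {} \<or> T \<subseteq> U \<or> U \<subseteq> T) \<and> (\<forall>T\<in>R. T\<noteq>S \<longrightarrow> \<gamma> T > 0) \<and>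
     (\<forall>T\<in>R. T \<noteq> S \<longrightarrow> (\<forall>i\<in>T. \<forall>j\<in>T. \<forall>k\<in>S-T. i\<noteq>j \<longrightarrow> d i k < d i j)) \<and>
     (\<forall>i\<in>S. \<forall>j\<in>S. i\<noteq>j \<longrightarrow> d i j = (\<Sum>T\<in>{T\<in>R. i\<in>T \<and> j\<in>T}. \<gamma> T)) \<and>
     \<gamma> S = Min (DD S d)"

lemma core:
  assumes "finite S" "card S \<ge> 2" "\<forall>i\<in>S. \<forall>j\<in>S. d i j = d j i" "ultra S d" "card (DD S d) = k"
  shows "\<exists>R \<gamma>. good S d R \<gamma>"
  using assms(3-5)
proof (induction k arbitrary: d rule: less_induct)
  case (less k d)
  have fD: "finite (DD S d)" using DD_finite assms(1) by blast
  have neD: "DD S d \<noteq> {}" using DD_ne assms(1,2) by blast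
  show ?case
  proof (cases "card (DD S d) = 1")
    case True
    then obtain m where Dm: "DD S d = {m}" using card_1_singletonE by blast
    have dm: "d i j = m" if "i\<in>S" "j\<in>S" "i\<noteq>j" for i j
      using that Dm unfolding DD_def by blast
    have e: "{T\<in>{S}. i\<in>T \<and> j\<in>T} = {S}" if "i\<in>S" "j\<in>S" for i j using that by auto
    have "good S d {S} (\<lambda>_. m)"
      unfolding good_def using assms(2) Dm dm e by auto
    thus ?thesis by blast
  next
    case False
    hence c2: "card (DD S d) \<ge> 2" using neD fD
    proof -
      have "card (DD S d) > 0" using neD fD by (simp add: card_gt_0_iff)
      thus ?thesis using False by linarith
    qed
    define M where "M = Max (DD S d)"
    have MD: "M \<in> DD S d" unfolding M_def using fD neD by simp
    have leM: "x \<le> M" if "x \<in> DD S d" for x unfolding M_def using fD that by simp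
    have dleM: "d i j \<le> M" if "i\<in>S" "j\<in>S" "i\<noteq>j" for i j
      using leM that unfolding DD_def by blast
    have ne2: "DD S d - {M} \<noteq> {}"
      using c2 MD by (metis Diff_empty card.empty card_Diff1_le empty_iff fD insert_Diff
          card_insert_disjoint finite.emptyI le_antisym nat_le_linear not_less_eq_eq numeral_2_eq_2 One_nat_def)
    define v where "v = Max (DD S d - {M})"
    have vD: "v \<in> DD S d - {M}" unfolding v_def using fD ne2 by (intro Max_in) auto
    have lev: "x \<le> v" if "x \<in> DD S d - {M}" for x unfolding v_def using fD that by (intro Max_ge) auto
    have vM: "v < M" using vD leM by force
    define d' where "d' = (\<lambda>i j. min (d i j) v)"
    have D': "DD S d' = DD S d - {M}"
    proof
      show "DD S d' \<subseteq> DD S d - {M}"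
      proof
        fix x assume "x \<in> DD S d'"
        then obtain i j where ij: "i\<in>S" "j\<in>S" "i\<noteq>j" "x = d' i j" unfolding DD_def by blast
        show "x \<in> DD S d - {M}"
        proof (cases "d i j \<le> v")
          case True
          hence "x = d i j" using ij unfolding d'_def by simp
          thus ?thesis using ij True vM unfolding DD_def by auto
        next
          case False
          hence "x = v" using ij unfolding d'_def by simp
          thus ?thesis using vD by simp
        qed
      qed
    next
      show "DD S d - {M} \<subseteq> DD S d'"
      proof
        fix x assume x: "x \<in> DD S d - {M}"
        then obtain i j where ij: "i\<in>S" "j\<in>S" "i\<noteq>j" "x = d i j" unfolding DD_def by blast
        have "x \<le> v" using lev x by blast
        hence "x = d' i j" using ij unfolding d'_def by simp
        thus "x \<in> DD S d'" using ij unfolding DD_def by blast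
      qed
    qed
    have lt: "card (DD S d') < k" using D' less.prems(3) MD fD c2
      by (simp add: card_Diff1_less)
    have sym': "\<forall>i\<in>S. \<forall>j\<in>S. d' i j = d' j i" using less.prems(1) unfolding d'_def by simp
    have ultra': "ultra S d'" using less.prems(2) unfolding ultra_def d'_def
      by (metis min.mono min.idem min.assoc min.commute order_refl)
    obtain R' \<gamma>' where g': "good S d' R' \<gamma>'"
      using less.IH[OF lt sym' ultra' refl] by blast
    note gg = g'[unfolded good_def]
    have S'R: "S \<in> R'" using gg[THEN conjunct1] .
    have sub': "\<And>T. T\<in>R' \<Longrightarrow> T \<subseteq> S \<and> card T \<ge> 2"
      using gg[THEN conjunct2, THEN conjunct1] by blast
    have nest': "\<And>T U. T\<in>R' \<Longrightarrow> U\<in>R' \<Longrightarrow> T \<inter> U = {} \<or> T \<subseteq> U \<or> U \<subseteq> T"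
      using gg[THEN conjunct2, THEN conjunct2, THEN conjunct1] by blast
    have pos': "\<And>T. T\<in>R' \<Longrightarrow> T\<noteq>S \<Longrightarrow> \<gamma>' T > 0"
      using gg[THEN conjunct2, THEN conjunct2, THEN conjunct2, THEN conjunct1] by blast
    have inv': "\<And>T i j k. T\<in>R' \<Longrightarrow> T\<noteq>S \<Longrightarrow> i\<in>T \<Longrightarrow> j\<in>T \<Longrightarrow> k\<in>S-T \<Longrightarrow> i\<noteq>j \<Longrightarrow> d' i k < d' i j"
      using gg[THEN conjunct2, THEN conjunct2, THEN conjunct2, THEN conjunct2, THEN conjunct1] by blast
    have sum': "\<And>i j. i\<in>S \<Longrightarrow> j\<in>S \<Longrightarrow> i\<noteq>j \<Longrightarrow> d' i j = (\<Sum>T\<in>{T\<in>R'. i\<in>T \<and> j\<in>T}. \<gamma>' T)"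
      using gg[THEN conjunct2, THEN conjunct2, THEN conjunct2, THEN conjunct2, THEN conjunct2, THEN conjunct1] by blast
    have min': "\<gamma>' S = Min (DD S d')"
      using gg[THEN conjunct2, THEN conjunct2, THEN conjunct2, THEN conjunct2, THEN conjunct2, THEN conjunct2] .
    have symd: "\<And>i j. i\<in>S \<Longrightarrow> j\<in>S \<Longrightarrow> d i j = d j i" using less.prems(1) by blast
    have tr: "d x z = M" if "x\<in>S" "y\<in>S" "z\<in>S" "x\<noteq>y" "y\<noteq>z" "x\<noteq>z" "d x y = M" "d y z = M" for x y z
    proof -
      have "min (d x y) (d y z) \<le> d x z" using less.prems(2) that unfolding ultra_def by blast
      thus ?thesis using dleM[of x z] that by simp
    qed
    define C where "C = (\<lambda>x. {y\<in>S. y = x \<or> d x y = M})"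
    have CS: "C x \<subseteq> S" for x unfolding C_def by auto
    have C1: "C y = C x" if "x\<in>S" "y \<in> C x" for x y
    proof (cases "y = x")
      case True thus ?thesis by simp
    next
      case False
      have yS: "y\<in>S" and dxy: "d x y = M" using that False unfolding C_def by auto
      have dyx: "d y x = M" using dxy symd[OF \<open>x\<in>S\<close> yS] by simp
      show ?thesis
      proof (rule set_eqI, rule iffI)
        fix z assume "z \<in> C y"
        hence zS: "z\<in>S" and z: "z = y \<or> d y z = M" unfolding C_def by auto
        show "z \<in> C x"
        proof (cases "z = x \<or> z = y")
          case True thus ?thesis using zS dxy unfolding C_def by auto
        next
          case False
          hence "d y z = M" using z by auto
          hence "d x z = M" using tr[of x y z] False \<open>x\<in>S\<close> yS zS dxy \<open>y\<noteq>x\<close> by auto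
          thus ?thesis using zS unfolding C_def by auto
        qed
      next
        fix z assume "z \<in> C x"
        hence zS: "z\<in>S" and z: "z = x \<or> d x z = M" unfolding C_def by auto
        show "z \<in> C y"
        proof (cases "z = x \<or> z = y")
          case True thus ?thesis using zS dyx unfolding C_def by auto
        next
          case False
          hence "d x z = M" using z by auto
          hence "d y z = M" using tr[of y x z] False \<open>x\<in>S\<close> yS zS dyx \<open>y\<noteq>x\<close> by auto
          thus ?thesis using zS unfolding C_def by auto
        qed
      qed
    qed
    have CM: "d i j = M" if "x\<in>S" "i\<in>C x" "j \<in> C x" "i\<noteq>j" for x i j
    proof -
      have "C i = C x" using C1 that by blast
      hence "j \<in> C i" using that by simp
      thus ?thesis using that unfolding C_def by auto
    qed
    define tops where "tops = {C x | x. x\<in>S \<and> card (C x) \<ge> 2}"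
    define R where "R = R' \<union> tops"
    define w where "w = M - v"
    have wpos: "w > 0" using vM unfolding w_def by simp
    define \<gamma> where "\<gamma> = (\<lambda>T. (if T\<in>R' then \<gamma>' T else 0) + (if T \<in> tops then w else 0))"
    have Stops: "S \<notin> tops"
    proof
      assume "S \<in> tops"
      then obtain x where x: "x\<in>S" "C x = S" unfolding tops_def by blast
      obtain y where y: "y \<in> DD S d - {M}" using ne2 by blast
      then obtain a b where ab: "a\<in>S" "b\<in>S" "a\<noteq>b" "d a b \<noteq> M" unfolding DD_def by blast
      have "d a b = M" using CM[of x a b] x ab by simp
      thus False using ab by simp
    qed
    have "good S d R \<gamma>"
      unfolding good_def
    proof (intro conjI ballI impI)
      show "S \<in> R" using S'R unfolding R_def by simp
    next
      fix T assume "T \<in> R"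
      thus "T \<subseteq> S" using sub' CS unfolding R_def tops_def by auto
    next
      fix T assume "T \<in> R"
      thus "2 \<le> card T" using sub' unfolding R_def tops_def by auto
    next
      fix T U assume T: "T \<in> R" and U: "U \<in> R"
      have mix: "T \<inter> U = {} \<or> T \<subseteq> U \<or> U \<subseteq> T" if T: "T\<in>R'" and U: "U\<in>tops" for T U
      proof (cases "T = S")
        case True thus ?thesis using U CS unfolding tops_def by auto
      next
        case TS: False
        obtain x where x: "x\<in>S" "U = C x" using U unfolding tops_def by blast
        show ?thesis
        proof (rule ccontr)
          assume "\<not> ?thesis"
          then obtain i c where i: "i\<in>T" "i\<in>U" and c: "c\<in>U" "c\<notin>T" by blast
          have "card T \<ge> 2" using sub' T by blast
          moreover have "\<not> T \<subseteq> {i}"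
          proof
            assume "T \<subseteq> {i}"
            hence "card T \<le> card {i}" by (intro card_mono) auto
            thus False using \<open>card T \<ge> 2\<close> by simp
          qed
          then obtain j where j: "j\<in>T" "j\<noteq>i" by blast
          have cS: "c\<in>S" using c x CS by blast
          have "d' i c < d' i j" using inv'[OF T TS i(1) j(1)] cS c j by blast
          moreover have "d i c = M" using CM[of x i c] x i c by auto
          ultimately have "v < min (d i j) v" unfolding d'_def using vM by simp
          thus False by simp
        qed
      qed
      show "T \<inter> U = {} \<or> T \<subseteq> U \<or> U \<subseteq> T"
      proof (cases "T \<in> R'")
        case TR: True
        show ?thesis
        proof (cases "U \<in> R'")
          case True thus ?thesis using nest' TR by blast
        next
          case False thus ?thesis using mix[OF TR] U unfolding R_def by blast
        qed
      next
        case TR: False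
        hence Tt: "T \<in> tops" using T unfolding R_def by blast
        show ?thesis
        proof (cases "U \<in> R'")
          case True thus ?thesis using mix[OF True Tt] by blast
        next
          case False
          hence Ut: "U \<in> tops" using U unfolding R_def by blast
          obtain x where x: "x\<in>S" "T = C x" using Tt unfolding tops_def by blast
          obtain y where y: "y\<in>S" "U = C y" using Ut unfolding tops_def by blast
          show ?thesis
          proof (cases "T \<inter> U = {}")
            case False
            then obtain z where "z \<in> C x" "z \<in> C y" using x y by blast
            hence "C x = C y" using C1 x y by metis
            thus ?thesis using x y by simp
          qed simp
        qed
      qed
    next
      fix T assume T: "T \<in> R" "T \<noteq> S"
      show "0 < \<gamma> T"
      proof (cases "T \<in> R'")
        case True
        have "\<gamma>' T > 0" using pos' True T(2) by blast
        thus ?thesis using wpos True unfolding \<gamma>_def by (simp add: add_pos_pos)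
      next
        case False
        thus ?thesis using T wpos unfolding \<gamma>_def R_def by simp
      qed
    next
      fix T i j k assume T: "T \<in> R" "T \<noteq> S" and ij: "i\<in>T" "j\<in>T" and k: "k\<in>S-T" and ne: "i\<noteq>j"
      show "d i k < d i j"
      proof (cases "T \<in> R'")
        case True
        have "d' i k < d' i j" using inv'[OF True T(2) ij k ne] .
        thus ?thesis unfolding d'_def by (simp add: min_def split: if_splits)
      next
        case False
        then obtain x where x: "x\<in>S" "T = C x" using T unfolding R_def tops_def by blast
        have "d i j = M" using CM x ij ne by blast
        have iS: "i\<in>S" using x ij CS by blast
        have "i \<noteq> k" using k ij by blast
        have "d i k \<noteq> M"
        proof
          assume "d i k = M"
          hence "k \<in> C i" using k unfolding C_def by blast
          moreover have "C i = C x" using C1 x ij by blast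
          ultimately show False using k x by blast
        qed
        moreover have "d i k \<le> M" using dleM iS k \<open>i\<noteq>k\<close> by blast
        ultimately show ?thesis using \<open>d i j = M\<close> by simp
      qed
    next
      fix i j assume ij: "i\<in>S" "j\<in>S" "i\<noteq>j"
      have fR': "finite R'" using sub' assms(1)
        by (meson Pow_iff finite_Pow_iff finite_subset subsetI)
      have "tops \<subseteq> Pow S" using CS unfolding tops_def by blast
      hence ftops: "finite tops" using assms(1) by (meson finite_Pow_iff finite_subset)
      have fR: "finite R" unfolding R_def using fR' ftops by simp
      let ?P = "\<lambda>T. i\<in>T \<and> j\<in>T"
      have "(\<Sum>T\<in>{T\<in>R. ?P T}. \<gamma> T) =
            (\<Sum>T\<in>{T\<in>R. ?P T}. (if T\<in>R' then \<gamma>' T else 0)) + (\<Sum>T\<in>{T\<in>R. ?P T}. (if T \<in> tops then w else 0))"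
        unfolding \<gamma>_def by (simp add: sum.distrib)
      also have "(\<Sum>T\<in>{T\<in>R. ?P T}. (if T\<in>R' then \<gamma>' T else 0)) = (\<Sum>T\<in>{T\<in>R'. ?P T}. \<gamma>' T)"
      proof -
        have "(\<Sum>T\<in>{T\<in>R. ?P T}. (if T\<in>R' then \<gamma>' T else 0)) = (\<Sum>T\<in>{T\<in>R'. ?P T}. (if T\<in>R' then \<gamma>' T else 0))"
          by (rule sum.mono_neutral_right) (use fR in \<open>auto simp: R_def\<close>)
        thus ?thesis by simp
      qed
      also have "(\<Sum>T\<in>{T\<in>R. ?P T}. (if T \<in> tops then w else 0)) = (\<Sum>T\<in>{T\<in>tops. ?P T}. w)"
      proof -
        have "(\<Sum>T\<in>{T\<in>R. ?P T}. (if T \<in> tops then w else 0)) = (\<Sum>T\<in>{T\<in>tops. ?P T}. (if T \<in> tops then w else 0))"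
          by (rule sum.mono_neutral_right) (use fR in \<open>auto simp: R_def\<close>)
        thus ?thesis by simp
      qed
      also have "(\<Sum>T\<in>{T\<in>tops. ?P T}. w) = (if d i j = M then w else 0)"
      proof (cases "d i j = M")
        case True
        have "{T\<in>tops. ?P T} = {C i}"
        proof
          show "{C i} \<subseteq> {T\<in>tops. ?P T}"
          proof -
            have "{i,j} \<subseteq> C i" using ij True unfolding C_def by auto
            hence "card {i,j} \<le> card (C i)" using CS assms(1)
              by (intro card_mono) (auto intro: finite_subset)
            hence "card (C i) \<ge> 2" using ij by simp
            hence "C i \<in> tops" using ij unfolding tops_def by blast
            moreover have "j \<in> C i" using ij True unfolding C_def by auto
            moreover have "i \<in> C i" using ij unfolding C_def by auto
            ultimately show ?thesis by blast
          qed
        next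
          show "{T\<in>tops. ?P T} \<subseteq> {C i}"
          proof
            fix T assume "T \<in> {T\<in>tops. ?P T}"
            then obtain x where x: "x\<in>S" "T = C x" "i \<in> C x" unfolding tops_def by blast
            thus "T \<in> {C i}" using C1 by auto
          qed
        qed
        thus ?thesis using True by simp
      next
        case False
        have emp: "{T\<in>tops. ?P T} = {}"
        proof (rule ccontr)
          assume "{T\<in>tops. ?P T} \<noteq> {}"
          then obtain x where x: "x\<in>S" "i \<in> C x" "j \<in> C x" unfolding tops_def by blast
          thus False using CM[OF x ij(3)] False by simp
        qed
        show ?thesis unfolding emp using False by simp
      qed
      finally have e: "(\<Sum>T\<in>{T\<in>R. ?P T}. \<gamma> T) = d' i j + (if d i j = M then w else 0)"
        using sum'[OF ij] by simp
      show "d i j = (\<Sum>T\<in>{T\<in>R. ?P T}. \<gamma> T)"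
      proof (cases "d i j = M")
        case True thus ?thesis using e vM unfolding d'_def w_def by simp
      next
        case False
        hence "d i j \<in> DD S d - {M}" using ij unfolding DD_def by blast
        hence "d i j \<le> v" using lev by blast
        thus ?thesis using e False unfolding d'_def by simp
      qed
    next
      have "Min (DD S d) \<in> DD S d" using fD neD by simp
      moreover have "Min (DD S d) \<le> v" using vD fD by simp
      ultimately have mD: "Min (DD S d) \<in> DD S d - {M}" using vM by auto
      have "Min (DD S d - {M}) = Min (DD S d)"
      proof (rule antisym)
        show "Min (DD S d - {M}) \<le> Min (DD S d)" using mD fD by simp
        show "Min (DD S d) \<le> Min (DD S d - {M})" using fD ne2 by simp
      qed
      thus "\<gamma> S = Min (DD S d)" using min' D' S'R Stops unfolding \<gamma>_def by simp
    qed
    thus ?thesis by blast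
  qed
qed

lemma AT_row0:
  assumes "T \<subseteq> {1..n}" "i \<in> {1..n}"
  shows "(\<Sum>j\<in>{1..n}. AT T i j) = 0"
proof (cases "i \<in> T")
  case False thus ?thesis unfolding AT_def by simp
next
  case True
  have fT: "finite T" using assms(1) finite_subset by blast
  have "(\<Sum>j\<in>{1..n}. AT T i j) = AT T i i + (\<Sum>j\<in>{1..n}-{i}. AT T i j)"
    using assms(2) by (simp add: sum.remove)
  also have "(\<Sum>j\<in>{1..n}-{i}. AT T i j) = (\<Sum>j\<in>{1..n}-{i}. if j \<in> T then -1 else 0)"
    by (rule sum.cong) (use True in \<open>auto simp: AT_def\<close>)
  also have "\<dots> = (\<Sum>j\<in>{j\<in>{1..n}-{i}. j \<in> T}. -1)"
    by (rule sum.inter_filter[symmetric]) simp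
  also have "{j\<in>{1..n}-{i}. j \<in> T} = T - {i}" using assms(1) by auto
  also have "(\<Sum>j\<in>T - {i}. (-1::rat)) = - of_nat (card T - 1)"
    using True fT by simp
  finally have e: "(\<Sum>j\<in>{1..n}. AT T i j) = AT T i i + - of_nat (card T - 1)" .
  have "card T \<noteq> 0" using True fT by auto
  hence c1: "card T \<ge> 1" by linarith
  have "AT T i i = of_nat (card T) - 1" using True unfolding AT_def by simp
  thus ?thesis using e c1 by (simp add: of_nat_diff)
qed

theorem mainTheorem6:
  fixes n :: nat and A :: "nat \<Rightarrow> nat \<Rightarrow> rat" and s :: rat
  assumes "n \<ge> 2"
    and "symmetric_mat n A"
    and "exceptional n A"
    and "magic n A s"
  shows "\<exists>R \<gamma>. is_tree n R \<gamma> \<and>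
           (\<forall>i\<in>{1..n}. \<forall>j\<in>{1..n}.
              A i j = (if i = j then s else 0) + (\<Sum>T\<in>R. \<gamma> T * AT T i j)) \<and>
           \<gamma> {1..n} = Min {- A i j | i j. i \<in> {1..n} \<and> j \<in> {1..n} \<and> i \<noteq> j}"
proof -
  define S where "S = {1..n}"
  define d where "d = (\<lambda>i j. - A i j)"
  have fS: "finite S" unfolding S_def by simp
  have cS: "card S \<ge> 2" unfolding S_def using assms(1) by simp
  have sym: "\<forall>i\<in>S. \<forall>j\<in>S. d i j = d j i" using assms(2) unfolding symmetric_mat_def S_def d_def by simp
  have ul: "ultra S d" unfolding ultra_def
  proof (intro ballI impI)
    fix i j k assume ijk: "i\<in>S" "j\<in>S" "k\<in>S" "i \<noteq> j \<and> j \<noteq> k \<and> i \<noteq> k"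
    have "max_twice (A i j) (A j k) (A k i)" using assms(3) ijk unfolding exceptional_def S_def by blast
    hence "A k i \<le> max (A i j) (A j k)" unfolding max_twice_def Let_def by (auto simp: max_def split: if_splits)
    moreover have "A k i = A i k" using assms(2) ijk unfolding symmetric_mat_def S_def by blast
    ultimately show "min (d i j) (d j k) \<le> d i k" unfolding d_def by (auto simp: min_def max_def split: if_splits)
  qed
  obtain R \<gamma> where g: "good S d R \<gamma>" using core[OF fS cS sym ul refl] by blast
  note gg = g[unfolded good_def]
  have S'R: "S \<in> R" using gg[THEN conjunct1] .
  have sub: "\<And>T. T\<in>R \<Longrightarrow> T \<subseteq> S \<and> card T \<ge> 2"
    using gg[THEN conjunct2, THEN conjunct1] by blast
  have nest: "\<forall>T\<in>R. \<forall>U\<in>R. T \<inter> U = {} \<or> T \<subseteq> U \<or> U \<subseteq> T"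
    using gg[THEN conjunct2, THEN conjunct2, THEN conjunct1] .
  have pos: "\<forall>T\<in>R. T\<noteq>S \<longrightarrow> \<gamma> T > 0"
    using gg[THEN conjunct2, THEN conjunct2, THEN conjunct2, THEN conjunct1] .
  have sm: "\<And>i j. i\<in>S \<Longrightarrow> j\<in>S \<Longrightarrow> i\<noteq>j \<Longrightarrow> d i j = (\<Sum>T\<in>{T\<in>R. i\<in>T \<and> j\<in>T}. \<gamma> T)"
    using gg[THEN conjunct2, THEN conjunct2, THEN conjunct2, THEN conjunct2, THEN conjunct2, THEN conjunct1] by blast
  have mn: "\<gamma> S = Min (DD S d)"
    using gg[THEN conjunct2, THEN conjunct2, THEN conjunct2, THEN conjunct2, THEN conjunct2, THEN conjunct2] .
  have fR: "finite R"
  proof -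
    have "R \<subseteq> Pow S" using sub by blast
    thus ?thesis using fS by (meson finite_Pow_iff finite_subset)
  qed
  have "species_of_tree n R" unfolding species_of_tree_def S_def[symmetric]
    using S'R sub nest by blast
  hence tree: "is_tree n R \<gamma>" unfolding is_tree_def S_def[symmetric] using pos by blast
  define f where "f = (\<lambda>i j. (if i = j then s else 0) + (\<Sum>T\<in>R. \<gamma> T * AT T i j))"
  have off: "A i j = f i j" if ij: "i\<in>S" "j\<in>S" "i\<noteq>j" for i j
  proof -
    have "(\<Sum>T\<in>R. \<gamma> T * AT T i j) = (\<Sum>T\<in>{T\<in>R. i\<in>T \<and> j\<in>T}. \<gamma> T * AT T i j)"
      by (rule sum.mono_neutral_right) (use fR ij in \<open>auto simp: AT_def\<close>)
    also have "\<dots> = (\<Sum>T\<in>{T\<in>R. i\<in>T \<and> j\<in>T}. - \<gamma> T)"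
      by (rule sum.cong) (use ij in \<open>auto simp: AT_def\<close>)
    also have "\<dots> = - d i j" using sm[OF ij] by (simp add: sum_negf)
    finally show ?thesis unfolding f_def d_def using ij by simp
  qed
  have rowf: "(\<Sum>j\<in>S. f i j) = s" if i: "i\<in>S" for i
  proof -
    have "(\<Sum>j\<in>S. f i j) = (\<Sum>j\<in>S. (if i = j then s else 0)) + (\<Sum>j\<in>S. \<Sum>T\<in>R. \<gamma> T * AT T i j)"
      unfolding f_def by (simp add: sum.distrib)
    also have "(\<Sum>j\<in>S. (if i = j then s else 0)) = s" using i fS by simp
    also have "(\<Sum>j\<in>S. \<Sum>T\<in>R. \<gamma> T * AT T i j) = (\<Sum>T\<in>R. \<gamma> T * (\<Sum>j\<in>S. AT T i j))"
      by (subst sum.swap) (simp add: sum_distrib_left)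
    also have "\<dots> = 0"
      using AT_row0 sub i unfolding S_def by (intro sum.neutral) auto
    finally show ?thesis by simp
  qed
  have rowA: "(\<Sum>j\<in>S. A i j) = s" if "i\<in>S" for i using assms(4) that unfolding magic_def S_def by blast
  have all: "A i j = f i j" if ij: "i\<in>S" "j\<in>S" for i j
  proof (cases "i = j")
    case False thus ?thesis using off ij by blast
  next
    case True
    have "(\<Sum>j\<in>S-{i}. A i j) = (\<Sum>j\<in>S-{i}. f i j)" by (rule sum.cong) (use off ij in auto)
    moreover have "(\<Sum>j\<in>S. A i j) = A i i + (\<Sum>j\<in>S-{i}. A i j)" using fS ij by (simp add: sum.remove)
    moreover have "(\<Sum>j\<in>S. f i j) = f i i + (\<Sum>j\<in>S-{i}. f i j)" using fS ij by (simp add: sum.remove)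
    ultimately show ?thesis using rowA[OF ij(1)] rowf[OF ij(1)] True by simp
  qed
  have m2: "\<gamma> {1..n} = Min {- A i j | i j. i \<in> {1..n} \<and> j \<in> {1..n} \<and> i \<noteq> j}"
    using mn unfolding S_def DD_def d_def by simp
  have all2: "\<forall>i\<in>{1..n}. \<forall>j\<in>{1..n}.
              A i j = (if i = j then s else 0) + (\<Sum>T\<in>R. \<gamma> T * AT T i j)"
    using all unfolding S_def f_def by blast
  show ?thesis using tree all2 m2 by (intro exI[of _ R] exI[of _ \<gamma>] conjI)
qed

end
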